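(* If $R$ is a $v$-domain, then every nonzero finitely generated ideal of $R$ is $t$-basic.
   Context: For a domain $R$ with quotient field $K$: $I^{-1}=(R:I)=\{x\in K:xI\subseteq R\}$, $I_v=(I^{-1})^{-1}$, $I_t=\bigcup J_v$ over finitely generated subideals $J\subseteq I$. $R$ is a $v$-domain if every nonzero finitely generated ideal $I$ satisfies $(II^{-1})_v=R$. For a nonzero ideal $I$, an ideal $J\subseteq I$ is a $t$-reduction of $I$ if $(JI^n)_t=(I^{n+1})_t$ for some integer $n\ge0$; $I$ is $t$-basic if every $t$-reduction $J$ of $I$ satisfies $J_t=I_t$. *)

theory Defs
  imports "HOL-Computational_Algebra.Fraction_Field"
begin

text \<open>We work in the quotient field K = 'a fract of a domain R = 'a (class idom).
  R is identified with its image Rset in K; ideals of R are R-submodules of K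
  contained in Rset, fractional sets are arbitrary subsets of K.\<close>

definition Rset :: "'a::idom fract set" where
  "Rset = {Fract a 1 | a. True}"

definition is_rsub :: "'a::idom fract set \<Rightarrow> bool" where
  "is_rsub X \<longleftrightarrow> 0 \<in> X \<and> (\<forall>x\<in>X. \<forall>y\<in>X. x + y \<in> X) \<and> (\<forall>r\<in>Rset. \<forall>x\<in>X. r * x \<in> X)"

definition is_ideal :: "'a::idom fract set \<Rightarrow> bool" where
  "is_ideal I \<longleftrightarrow> is_rsub I \<and> I \<subseteq> Rset"

definition rspan :: "'a::idom fract set \<Rightarrow> 'a fract set" where
  "rspan S = \<Inter>{X. is_rsub X \<and> S \<subseteq> X}"

definition fg_ideal :: "'a::idom fract set \<Rightarrow> bool" where
  "fg_ideal I \<longleftrightarrow> is_ideal I \<and> (\<exists>F. finite F \<and> I = rspan F)"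

definition set_prod :: "'a::idom fract set \<Rightarrow> 'a fract set \<Rightarrow> 'a fract set" where
  "set_prod A B = rspan {a * b | a b. a \<in> A \<and> b \<in> B}"

primrec set_pow :: "'a::idom fract set \<Rightarrow> nat \<Rightarrow> 'a fract set" where
  "set_pow A 0 = Rset"
| "set_pow A (Suc n) = set_prod A (set_pow A n)"

definition colon_inv :: "'a::idom fract set \<Rightarrow> 'a fract set" where
  "colon_inv A = {x. \<forall>a\<in>A. x * a \<in> Rset}"

definition vcl :: "'a::idom fract set \<Rightarrow> 'a fract set" where
  "vcl A = colon_inv (colon_inv A)"

definition tcl :: "'a::idom fract set \<Rightarrow> 'a fract set" where
  "tcl I = \<Union>{vcl J | J. fg_ideal J \<and> J \<subseteq> I}"

definition v_domain :: "'a::idom itself \<Rightarrow> bool" where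
  "v_domain _ \<longleftrightarrow> (\<forall>I::'a fract set. fg_ideal I \<and> I \<noteq> {0} \<longrightarrow>
      vcl (set_prod I (colon_inv I)) = Rset)"

definition t_reduction :: "'a::idom fract set \<Rightarrow> 'a fract set \<Rightarrow> bool" where
  "t_reduction J I \<longleftrightarrow> is_ideal J \<and> J \<subseteq> I \<and>
      (\<exists>n. tcl (set_prod J (set_pow I n)) = tcl (set_pow I (Suc n)))"

definition t_basic :: "'a::idom fract set \<Rightarrow> bool" where
  "t_basic I \<longleftrightarrow> (\<forall>J. t_reduction J I \<longrightarrow> tcl J = tcl I)"

end

theory Submission
  imports Defs
begin

lemma Rset_iff: "x \<in> Rset \<longleftrightarrow> (\<exists>a. x = Fract a 1)"
  by (auto simp: Rset_def)

lemma Rset_0: "0 \<in> Rset" by (auto simp: Rset_iff Zero_fract_def)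
lemma Rset_1: "1 \<in> Rset" by (auto simp: Rset_iff One_fract_def)
lemma Rset_add: "x \<in> Rset \<Longrightarrow> y \<in> Rset \<Longrightarrow> x + y \<in> Rset"
  by (auto simp: Rset_iff)
lemma Rset_mult: "x \<in> Rset \<Longrightarrow> y \<in> Rset \<Longrightarrow> x * y \<in> Rset"
  by (auto simp: Rset_iff)

lemma rsub_Rset: "is_rsub Rset"
  by (auto simp: is_rsub_def Rset_0 Rset_add Rset_mult)

lemma rspan_rsub: "is_rsub (rspan S)"
  unfolding rspan_def is_rsub_def by auto

lemma rspan_0: "0 \<in> rspan S"
  using rspan_rsub[of S] unfolding is_rsub_def by blast
lemma rspan_add: "x \<in> rspan S \<Longrightarrow> y \<in> rspan S \<Longrightarrow> x + y \<in> rspan S"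
  using rspan_rsub[of S] unfolding is_rsub_def by blast
lemma rspan_smult: "r \<in> Rset \<Longrightarrow> x \<in> rspan S \<Longrightarrow> r * x \<in> rspan S"
  using rspan_rsub[of S] unfolding is_rsub_def by blast

lemma rspan_sup: "S \<subseteq> rspan S"
  unfolding rspan_def by (rule Inter_greatest) simp

lemma rspan_least: "is_rsub X \<Longrightarrow> S \<subseteq> X \<Longrightarrow> rspan S \<subseteq> X"
  unfolding rspan_def by (rule Inter_lower) simp

lemma rspan_mono: "S \<subseteq> T \<Longrightarrow> rspan S \<subseteq> rspan T"
  by (rule rspan_least[OF rspan_rsub subset_trans[OF _ rspan_sup]])

lemma set_prod_rsub: "is_rsub (set_prod A B)"
  by (simp add: set_prod_def rspan_rsub)

lemma set_prod_gen: "a \<in> A \<Longrightarrow> b \<in> B \<Longrightarrow> a * b \<in> set_prod A B"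
  unfolding set_prod_def by (rule subsetD[OF rspan_sup]) blast

lemma set_prod_mono: "A \<subseteq> A' \<Longrightarrow> B \<subseteq> B' \<Longrightarrow> set_prod A B \<subseteq> set_prod A' B'"
  unfolding set_prod_def by (rule rspan_mono) blast

lemma colon_inv_rsub: "is_rsub (colon_inv X)"
  unfolding is_rsub_def colon_inv_def
  by (auto simp: Rset_0 distrib_right Rset_add mult.assoc Rset_mult)

lemma colon_inv_anti: "X \<subseteq> Y \<Longrightarrow> colon_inv Y \<subseteq> colon_inv X"
  unfolding colon_inv_def by auto

lemma colon_inv_ext: "X \<subseteq> colon_inv (colon_inv X)"
  unfolding colon_inv_def by (auto simp: mult.commute)

lemma vcl_mono: "X \<subseteq> Y \<Longrightarrow> vcl X \<subseteq> vcl Y"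
  unfolding vcl_def by (intro colon_inv_anti)

lemma vcl_ext: "X \<subseteq> vcl X"
  unfolding vcl_def by (rule colon_inv_ext)

lemma vcl_rsub: "is_rsub (vcl X)"
  unfolding vcl_def by (rule colon_inv_rsub)

lemma colon_inv_rspan: "colon_inv (rspan S) = colon_inv S"
proof
  show "colon_inv (rspan S) \<subseteq> colon_inv S" by (intro colon_inv_anti rspan_sup)
  show "colon_inv S \<subseteq> colon_inv (rspan S)"
  proof
    fix z assume z: "z \<in> colon_inv S"
    have "is_rsub {a. z * a \<in> Rset}"
      unfolding is_rsub_def
      by (auto simp: Rset_0 distrib_left Rset_add mult.left_commute Rset_mult)
    moreover have "S \<subseteq> {a. z * a \<in> Rset}" using z by (auto simp: colon_inv_def)
    ultimately have "rspan S \<subseteq> {a. z * a \<in> Rset}" by (rule rspan_least)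
    then show "z \<in> colon_inv (rspan S)" by (auto simp: colon_inv_def)
  qed
qed

lemma colon_inv_prod:
  "z \<in> colon_inv (set_prod X Y) \<longleftrightarrow> (\<forall>x\<in>X. \<forall>y\<in>Y. z * (x * y) \<in> Rset)"
  unfolding set_prod_def colon_inv_rspan by (auto simp: colon_inv_def)

lemma cancel:
  assumes v: "v_domain TYPE('a::idom)"
    and A: "fg_ideal (A :: 'a fract set)" "A \<noteq> {0}"
    and h: "colon_inv (set_prod C A) \<subseteq> colon_inv (set_prod B A)"
  shows "colon_inv C \<subseteq> colon_inv B"
proof
  fix z assume z: "z \<in> colon_inv C"
  show "z \<in> colon_inv B" unfolding colon_inv_def
  proof (intro CollectI ballI)
    fix b assume b: "b \<in> B"
    have "z * b \<in> colon_inv (set_prod A (colon_inv A))"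
      unfolding colon_inv_prod
    proof (intro ballI)
      fix a u assume a: "a \<in> A" and u: "u \<in> colon_inv A"
      have "z * u \<in> colon_inv (set_prod C A)"
        unfolding colon_inv_prod
      proof (intro ballI)
        fix c a' assume c: "c \<in> C" and a': "a' \<in> A"
        have "z * u * (c * a') = (z * c) * (u * a')" by (simp add: algebra_simps)
        moreover have "z * c \<in> Rset" using z c by (auto simp: colon_inv_def)
        moreover have "u * a' \<in> Rset" using u a' by (auto simp: colon_inv_def)
        ultimately show "z * u * (c * a') \<in> Rset" by (metis Rset_mult)
      qed
      with h have "z * u \<in> colon_inv (set_prod B A)" by blast
      then have "z * u * (b * a) \<in> Rset" using b a by (auto simp: colon_inv_prod)
      moreover have "z * u * (b * a) = z * b * (a * u)" by (simp add: algebra_simps)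
      ultimately show "z * b * (a * u) \<in> Rset" by simp
    qed
    moreover have "vcl (set_prod A (colon_inv A)) = Rset"
      using v A unfolding v_domain_def by blast
    then have "1 \<in> colon_inv (colon_inv (set_prod A (colon_inv A)))"
      using Rset_1 unfolding vcl_def by simp
    ultimately have "1 * (z * b) \<in> Rset" unfolding colon_inv_def by blast
    then show "z * b \<in> Rset" by simp
  qed
qed

lemma rspan_finite:
  assumes "x \<in> rspan (S :: 'a::idom fract set)"
  shows "\<exists>P. finite P \<and> P \<subseteq> S \<and> x \<in> rspan P"
proof -
  define X where "X = {x. \<exists>P. finite P \<and> P \<subseteq> S \<and> x \<in> rspan P}"
  have Xiff: "y \<in> X \<longleftrightarrow> (\<exists>P. finite P \<and> P \<subseteq> S \<and> y \<in> rspan P)" for y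
    by (simp add: X_def)
  have X0: "0 \<in> X" unfolding X_def
  proof (intro CollectI exI conjI)
    show "finite {}" by simp
    show "{} \<subseteq> S" by simp
    show "0 \<in> rspan {}" by (rule rspan_0)
  qed
  have Xadd: "x + y \<in> X" if "x \<in> X" "y \<in> X" for x y
  proof -
    from that(1)[unfolded Xiff] obtain P where P: "finite P" "P \<subseteq> S" "x \<in> rspan P"
      by blast
    from that(2)[unfolded Xiff] obtain Q where Q: "finite Q" "Q \<subseteq> S" "y \<in> rspan Q"
      by blast
    have "rspan P \<subseteq> rspan (P \<union> Q)" "rspan Q \<subseteq> rspan (P \<union> Q)"
      by (rule rspan_mono, blast)+
    with P Q have "x \<in> rspan (P \<union> Q)" "y \<in> rspan (P \<union> Q)" by blast+
    then have "x + y \<in> rspan (P \<union> Q)" by (rule rspan_add)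
    moreover have "finite (P \<union> Q)" "P \<union> Q \<subseteq> S" using P Q by blast+
    ultimately show ?thesis unfolding Xiff by blast
  qed
  have Xmult: "r * x \<in> X" if "r \<in> Rset" "x \<in> X" for r x
  proof -
    from that(2)[unfolded Xiff] obtain P where P: "finite P" "P \<subseteq> S" "x \<in> rspan P"
      by blast
    have "r * x \<in> rspan P" using that(1) P(3) by (rule rspan_smult)
    then show ?thesis using P unfolding Xiff by blast
  qed
  have "is_rsub X" unfolding is_rsub_def using X0 Xadd Xmult by blast
  moreover have "S \<subseteq> X"
  proof
    fix s assume s: "s \<in> S"
    have "s \<in> rspan {s}" using rspan_sup by blast
    moreover have "finite {s}" "{s} \<subseteq> S" using s by blast+
    ultimately show "s \<in> X" unfolding Xiff by blast
  qed
  ultimately have "rspan S \<subseteq> X" by (rule rspan_least)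
  with assms have "x \<in> X" by blast
  then show ?thesis unfolding Xiff .
qed

lemma extract_gens:
  assumes "finite P" "P \<subseteq> {j * b | j b. j \<in> J \<and> b \<in> A}"
  shows "\<exists>Jg. finite Jg \<and> Jg \<subseteq> J \<and> P \<subseteq> set_prod (rspan Jg) A"
  using assms
proof (induction P rule: finite_induct)
  case empty then show ?case by blast
next
  case (insert p P)
  then obtain Jg where Jg: "finite Jg" "Jg \<subseteq> J" "P \<subseteq> set_prod (rspan Jg) A" by auto
  from insert obtain j b where p: "p = j * b" "j \<in> J" "b \<in> A" by auto
  have "rspan Jg \<subseteq> rspan (insert j Jg)" by (rule rspan_mono) auto
  then have "P \<subseteq> set_prod (rspan (insert j Jg)) A" using Jg set_prod_mono by blast
  moreover have "p \<in> set_prod (rspan (insert j Jg)) A"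
    using p rspan_sup[of "insert j Jg"] by (auto intro: set_prod_gen)
  ultimately show ?case using Jg p by (intro exI[of _ "insert j Jg"]) auto
qed

lemma extract_gens2:
  assumes "finite S" "S \<subseteq> set_prod J A"
  shows "\<exists>Jg. finite Jg \<and> Jg \<subseteq> J \<and> S \<subseteq> set_prod (rspan Jg) A"
  using assms
proof (induction S rule: finite_induct)
  case empty then show ?case by blast
next
  case (insert x S)
  then obtain Jg where Jg: "finite Jg" "Jg \<subseteq> J" "S \<subseteq> set_prod (rspan Jg) A" by auto
  from insert have "x \<in> rspan {j * b | j b. j \<in> J \<and> b \<in> A}" by (auto simp: set_prod_def)
  then obtain P where P: "finite P" "P \<subseteq> {j * b | j b. j \<in> J \<and> b \<in> A}" "x \<in> rspan P"
    using rspan_finite by blast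
  then obtain Jh where Jh: "finite Jh" "Jh \<subseteq> J" "P \<subseteq> set_prod (rspan Jh) A"
    using extract_gens[OF P(1) P(2)] by blast
  have x: "x \<in> set_prod (rspan Jh) A"
    using rspan_least[OF set_prod_rsub Jh(3)] P(3) by blast
  have m1: "set_prod (rspan Jh) A \<subseteq> set_prod (rspan (Jg \<union> Jh)) A"
    by (rule set_prod_mono[OF rspan_mono]) auto
  have m2: "set_prod (rspan Jg) A \<subseteq> set_prod (rspan (Jg \<union> Jh)) A"
    by (rule set_prod_mono[OF rspan_mono]) auto
  have "insert x S \<subseteq> set_prod (rspan (Jg \<union> Jh)) A" using Jg(3) x m1 m2 by blast
  moreover have "finite (Jg \<union> Jh)" "Jg \<union> Jh \<subseteq> J" using Jg Jh by auto
  ultimately show ?case by blast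
qed

lemma directed:
  assumes "is_ideal (X :: 'a::idom fract set)" "finite S" "S \<subseteq> tcl X"
  shows "\<exists>G. fg_ideal G \<and> G \<subseteq> X \<and> S \<subseteq> vcl G"
  using assms(2,3)
proof (induction S rule: finite_induct)
  case empty
  have "rspan {} \<subseteq> X" using assms(1) by (intro rspan_least) (auto simp: is_ideal_def)
  moreover have "X \<subseteq> Rset" using assms(1) by (simp add: is_ideal_def)
  ultimately have "is_ideal (rspan {} :: 'a fract set)" using rspan_rsub[of "{}"] unfolding is_ideal_def by blast
  then have "fg_ideal (rspan {} :: 'a fract set)" unfolding fg_ideal_def by blast
  then show ?case using \<open>rspan {} \<subseteq> X\<close> by blast
next
  case (insert x S)
  then obtain G2 where G2: "fg_ideal G2" "G2 \<subseteq> X" "S \<subseteq> vcl G2" by auto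
  from insert obtain G1 where G1: "fg_ideal G1" "G1 \<subseteq> X" "x \<in> vcl G1"
    by (auto simp: tcl_def)
  from G1 G2 obtain F1 F2 where F: "finite F1" "G1 = rspan F1" "finite F2" "G2 = rspan F2"
    by (auto simp: fg_ideal_def)
  let ?G = "rspan (F1 \<union> F2)"
  have sub: "?G \<subseteq> X" using assms(1) G1 G2 F rspan_sup[of F1] rspan_sup[of F2]
    by (intro rspan_least) (auto simp: is_ideal_def)
  have fg: "fg_ideal ?G" using sub assms(1) F rspan_rsub
    by (auto simp: fg_ideal_def is_ideal_def)
  have "vcl G1 \<subseteq> vcl ?G" "vcl G2 \<subseteq> vcl ?G"
    using F by (auto intro!: vcl_mono rspan_mono)
  then show ?case using sub fg G1 G2 by (intro exI[of _ ?G]) auto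
qed

lemma ideal_prod:
  assumes "is_ideal A" "is_ideal B" shows "is_ideal (set_prod A B)"
proof -
  have "{a * b |a b. a \<in> A \<and> b \<in> B} \<subseteq> Rset"
  proof
    fix x assume "x \<in> {a * b |a b. a \<in> A \<and> b \<in> B}"
    then obtain a b where "x = a * b" "a \<in> A" "b \<in> B" by blast
    then show "x \<in> Rset" using assms Rset_mult unfolding is_ideal_def by blast
  qed
  then have "set_prod A B \<subseteq> Rset" unfolding set_prod_def by (rule rspan_least[OF rsub_Rset])
  then show ?thesis unfolding is_ideal_def using set_prod_rsub by blast
qed

lemma rspan_prod:
  "set_prod (rspan F) (rspan G :: 'a::idom fract set) = rspan {f * g | f g. f \<in> F \<and> g \<in> G}"
proof
  define T where "T = rspan {f * g | f g. f \<in> F \<and> g \<in> G}"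
  have Tr: "is_rsub T" unfolding T_def by (rule rspan_rsub)
  have T0: "0 \<in> T" unfolding T_def by (rule rspan_0)
  have Tadd: "x + y \<in> T" if "x \<in> T" "y \<in> T" for x y
    using that unfolding T_def by (rule rspan_add)
  have Tsm: "r * x \<in> T" if "r \<in> Rset" "x \<in> T" for r x
    using that unfolding T_def by (rule rspan_smult)
  have step1: "rspan G \<subseteq> {b. a * b \<in> T}" if a: "a \<in> F" for a
  proof (rule rspan_least)
    show "is_rsub {b. a * b \<in> T}" unfolding is_rsub_def
    proof (intro conjI ballI)
      show "0 \<in> {b. a * b \<in> T}" using T0 by simp
      fix x y assume "x \<in> {b. a * b \<in> T}" "y \<in> {b. a * b \<in> T}"
      then have "a * x + a * y \<in> T" using Tadd by simp
      then show "x + y \<in> {b. a * b \<in> T}" by (simp add: distrib_left)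
    next
      fix r x :: "'a fract" assume "r \<in> Rset" "x \<in> {b. a * b \<in> T}"
      then have "r * (a * x) \<in> T" using Tsm by simp
      then show "r * x \<in> {b. a * b \<in> T}" by (simp add: mult.left_commute)
    qed
    show "G \<subseteq> {b. a * b \<in> T}"
    proof
      fix g assume "g \<in> G"
      then have "a * g \<in> {f * g | f g. f \<in> F \<and> g \<in> G}" using a by blast
      then have "a * g \<in> T" unfolding T_def by (rule subsetD[OF rspan_sup])
      then show "g \<in> {b. a * b \<in> T}" by simp
    qed
  qed
  have step2: "rspan F \<subseteq> {a. \<forall>b\<in>rspan G. a * b \<in> T}"
  proof (rule rspan_least)
    show "is_rsub {a. \<forall>b\<in>rspan G. a * b \<in> T}" unfolding is_rsub_def
    proof (intro conjI ballI)
      show "0 \<in> {a. \<forall>b\<in>rspan G. a * b \<in> T}" using T0 by simp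
      fix x y assume "x \<in> {a. \<forall>b\<in>rspan G. a * b \<in> T}" "y \<in> {a. \<forall>b\<in>rspan G. a * b \<in> T}"
      then show "x + y \<in> {a. \<forall>b\<in>rspan G. a * b \<in> T}" using Tadd by (simp add: distrib_right)
    next
      fix r x :: "'a fract" assume "r \<in> Rset" "x \<in> {a. \<forall>b\<in>rspan G. a * b \<in> T}"
      then show "r * x \<in> {a. \<forall>b\<in>rspan G. a * b \<in> T}" using Tsm by (simp add: mult.assoc)
    qed
    show "F \<subseteq> {a. \<forall>b\<in>rspan G. a * b \<in> T}" using step1 by blast
  qed
  have "{a * b |a b. a \<in> rspan F \<and> b \<in> rspan G} \<subseteq> T" using step2 by blast
  then show "set_prod (rspan F) (rspan G) \<subseteq> rspan {f * g | f g. f \<in> F \<and> g \<in> G}"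
    unfolding set_prod_def T_def[symmetric] by (rule rspan_least[OF Tr])
  have "{f * g | f g. f \<in> F \<and> g \<in> G} \<subseteq> {a * b |a b. a \<in> rspan F \<and> b \<in> rspan G}"
    using rspan_sup[of F] rspan_sup[of G] by blast
  then show "rspan {f * g | f g. f \<in> F \<and> g \<in> G} \<subseteq> set_prod (rspan F) (rspan G)"
    unfolding set_prod_def by (rule rspan_mono)
qed

lemma Rset_rspan1: "Rset = rspan {1}"
proof
  show "rspan {1} \<subseteq> Rset" by (intro rspan_least rsub_Rset) (auto simp: Rset_1)
  show "Rset \<subseteq> rspan {1}"
  proof
    fix r assume "r \<in> Rset"
    moreover have "1 \<in> rspan {1}" using rspan_sup by blast
    ultimately have "r * 1 \<in> rspan {1}" by (rule rspan_smult)
    then show "r \<in> rspan {1}" by (metis mult_1_right)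
  qed
qed

lemma fg_prod:
  assumes "fg_ideal A" "fg_ideal B" shows "fg_ideal (set_prod A B)"
proof -
  from assms obtain F G where "finite F" "A = rspan F" "finite G" "B = rspan G"
    by (auto simp: fg_ideal_def)
  moreover have "finite {f * g | f g. f \<in> F \<and> g \<in> G}"
    using \<open>finite F\<close> \<open>finite G\<close>
    by (simp add: finite_image_set2)
  ultimately have "set_prod A B = rspan {f * g | f g. f \<in> F \<and> g \<in> G}"
    "finite {f * g | f g. f \<in> F \<and> g \<in> G}" using rspan_prod by auto
  moreover have "is_ideal (set_prod A B)" using ideal_prod assms by (auto simp: fg_ideal_def)
  ultimately show ?thesis unfolding fg_ideal_def by blast
qed

lemma fg_pow: "fg_ideal I \<Longrightarrow> fg_ideal (set_pow I n)"
proof (induction n)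
  case 0
  have "is_ideal (Rset :: 'a fract set)" unfolding is_ideal_def using rsub_Rset by blast
  moreover have "finite {1::'a fract}" by simp
  ultimately show ?case unfolding fg_ideal_def set_pow.simps using Rset_rspan1 by blast
next
  case (Suc n) then show ?case by (simp add: fg_prod)
qed

lemma pow_nonzero:
  assumes "I \<noteq> {0}" "is_ideal I" shows "\<exists>x\<in>set_pow I n. x \<noteq> 0"
proof (induction n)
  case 0
  have "(1::'a fract) \<noteq> 0" by simp
  then show ?case using Rset_1 by (simp only: set_pow.simps) blast
next
  case (Suc n)
  have "0 \<in> I" using assms(2) unfolding is_ideal_def is_rsub_def by blast
  with assms(1) obtain a where a: "a \<in> I" "a \<noteq> 0" by blast
  from Suc obtain x where x: "x \<in> set_pow I n" "x \<noteq> 0" by blast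
  have "a * x \<in> set_pow I (Suc n)" using a x by (simp add: set_prod_gen)
  moreover have "a * x \<noteq> 0" using a x by simp
  ultimately show ?case by blast
qed

lemma tcl_memI: "fg_ideal K \<Longrightarrow> K \<subseteq> X \<Longrightarrow> x \<in> vcl K \<Longrightarrow> x \<in> tcl X"
  unfolding tcl_def by blast

lemma tcl_memE: "x \<in> tcl X \<Longrightarrow> (\<And>K. fg_ideal K \<Longrightarrow> K \<subseteq> X \<Longrightarrow> x \<in> vcl K \<Longrightarrow> P) \<Longrightarrow> P"
  unfolding tcl_def by blast

lemma fg_rspan: "finite F \<Longrightarrow> rspan F \<subseteq> Rset \<Longrightarrow> fg_ideal (rspan F)"
  unfolding fg_ideal_def is_ideal_def using rspan_rsub by blast

theorem corollary1p9:
  assumes "v_domain TYPE('a::idom)"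
    and "fg_ideal (I :: 'a fract set)" and "I \<noteq> {0}"
  shows "t_basic I"
  unfolding t_basic_def
proof (intro allI impI)
  fix J :: "'a fract set" assume "t_reduction J I"
  then obtain n where J: "is_ideal J" "J \<subseteq> I"
    and eq: "tcl (set_prod J (set_pow I n)) = tcl (set_prod I (set_pow I n))"
    unfolding t_reduction_def set_pow.simps by blast
  define A where "A = set_pow I n"
  have Afg: "fg_ideal A" unfolding A_def using assms(2) by (rule fg_pow)
  have Iid: "is_ideal I" using assms(2) unfolding fg_ideal_def by blast
  have Anz: "A \<noteq> {0}" using pow_nonzero[OF assms(3) Iid, of n] unfolding A_def by blast
  have Aid: "is_ideal A" using Afg unfolding fg_ideal_def by blast
  have JAid: "is_ideal (set_prod J A)" using J(1) Aid by (rule ideal_prod)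
  have IAfg: "fg_ideal (set_prod I A)" using assms(2) Afg by (rule fg_prod)
  then obtain F where F: "finite F" "set_prod I A = rspan F" unfolding fg_ideal_def by blast
  have IARset: "set_prod I A \<subseteq> Rset" using IAfg unfolding fg_ideal_def is_ideal_def by blast
  have "F \<subseteq> tcl (set_prod I A)"
  proof
    fix f assume f: "f \<in> F"
    have "f \<in> set_prod I A" unfolding F(2) using f by (rule subsetD[OF rspan_sup])
    then have sub: "rspan {f} \<subseteq> set_prod I A" by (intro rspan_least[OF set_prod_rsub]) simp
    then have fg: "fg_ideal (rspan {f})" using IARset by (intro fg_rspan) auto
    have "f \<in> rspan {f}" by (rule subsetD[OF rspan_sup]) simp
    then have "f \<in> vcl (rspan {f})" by (rule subsetD[OF vcl_ext])
    then show "f \<in> tcl (set_prod I A)" using fg sub by (intro tcl_memI)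
  qed
  then have "F \<subseteq> tcl (set_prod J A)" using eq unfolding A_def by simp
  then obtain G where G: "fg_ideal G" "G \<subseteq> set_prod J A" "F \<subseteq> vcl G"
    using directed[OF JAid F(1)] by blast
  from G(1) obtain FG where FG: "finite FG" "G = rspan FG" unfolding fg_ideal_def by blast
  have "FG \<subseteq> G" unfolding FG(2) by (rule rspan_sup)
  then have FGs: "FG \<subseteq> set_prod J A" using G(2) by (rule subset_trans)
  obtain Jg where Jg': "finite Jg \<and> Jg \<subseteq> J \<and> FG \<subseteq> set_prod (rspan Jg) A"
    using extract_gens2[OF FG(1) FGs] by (rule exE)
  then have Jg: "finite Jg" "Jg \<subseteq> J" "FG \<subseteq> set_prod (rspan Jg) A" by simp_all
  define J0 where "J0 = rspan Jg"
  have J0J: "J0 \<subseteq> J" unfolding J0_def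
    using J(1) unfolding is_ideal_def by (intro rspan_least[OF _ Jg(2)]) (rule conjunct1)
  have "J \<subseteq> Rset" using J(1) unfolding is_ideal_def by (rule conjunct2)
  with J0J have "J0 \<subseteq> Rset" by (rule subset_trans)
  then have J0fg: "fg_ideal J0" unfolding J0_def using Jg(1) by (intro fg_rspan)
  have "G \<subseteq> set_prod J0 A" unfolding FG(2) J0_def
    by (rule rspan_least[OF set_prod_rsub Jg(3)])
  then have "vcl G \<subseteq> vcl (set_prod J0 A)" by (rule vcl_mono)
  moreover have "set_prod I A \<subseteq> vcl G" unfolding F(2)
    by (rule rspan_least[OF vcl_rsub G(3)])
  ultimately have "set_prod I A \<subseteq> vcl (set_prod J0 A)" by (rule subset_trans[rotated])
  then have "colon_inv (vcl (set_prod J0 A)) \<subseteq> colon_inv (set_prod I A)"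
    by (rule colon_inv_anti)
  moreover have "colon_inv (set_prod J0 A) \<subseteq> colon_inv (vcl (set_prod J0 A))"
    unfolding vcl_def by (rule colon_inv_ext)
  ultimately have "colon_inv (set_prod J0 A) \<subseteq> colon_inv (set_prod I A)" by (rule subset_trans[rotated])
  then have "colon_inv J0 \<subseteq> colon_inv I" by (rule cancel[OF assms(1) Afg Anz])
  then have vI: "vcl I \<subseteq> vcl J0" unfolding vcl_def by (rule colon_inv_anti)
  show "tcl J = tcl I"
  proof
    show "tcl J \<subseteq> tcl I"
    proof
      fix x assume "x \<in> tcl J"
      then show "x \<in> tcl I"
      proof (rule tcl_memE)
        fix K assume "fg_ideal K" "K \<subseteq> J" "x \<in> vcl K"
        moreover have "K \<subseteq> I" using \<open>K \<subseteq> J\<close> J(2) by (rule subset_trans)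
        ultimately show "x \<in> tcl I" by (intro tcl_memI)
      qed
    qed
    show "tcl I \<subseteq> tcl J"
    proof
      fix x assume "x \<in> tcl I"
      then show "x \<in> tcl J"
      proof (rule tcl_memE)
        fix K assume "fg_ideal K" "K \<subseteq> I" "x \<in> vcl K"
        have "vcl K \<subseteq> vcl I" using \<open>K \<subseteq> I\<close> by (rule vcl_mono)
        then have "x \<in> vcl J0" using vI \<open>x \<in> vcl K\<close> by (rule subsetD[OF subset_trans])
        then show "x \<in> tcl J" using J0fg J0J by (intro tcl_memI)
      qed
    qed
  qed
qed

end
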